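(* Let $G$ be a graph of order $n$ with at least one edge, minimum degree $\delta$, and $\mu(G)=\mu$. If $(x_1,\ldots,x_n)$ is a unit eigenvector of the adjacency matrix of $G$ for the eigenvalue $\mu$, then \[ \min\{x_1,\ldots,x_n\}\leq\sqrt{\frac{\delta}{\mu^{2}+\delta n-\delta^{2}}}. \]
   Context: Graphs are finite and simple. $\mu(G)$ denotes the largest eigenvalue of the adjacency matrix of $G$. A unit eigenvector is one of Euclidean norm 1. *)

theory Defs
  imports "HOL-Analysis.Analysis"
begin

definition simple_graph :: "('n::finite \<Rightarrow> 'n \<Rightarrow> bool) \<Rightarrow> bool" where
  "simple_graph E \<longleftrightarrow> (\<forall>i j. E i j \<longleftrightarrow> E j i) \<and> (\<forall>i. \<not> E i i)"

definition adj_matrix :: "('n::finite \<Rightarrow> 'n \<Rightarrow> bool) \<Rightarrow> real^'n^'n" where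
  "adj_matrix E = (\<chi> i j. if E i j then 1 else 0)"

definition degree :: "('n::finite \<Rightarrow> 'n \<Rightarrow> bool) \<Rightarrow> 'n \<Rightarrow> nat" where
  "degree E i = card {j. E i j}"

definition min_degree :: "('n::finite \<Rightarrow> 'n \<Rightarrow> bool) \<Rightarrow> nat" where
  "min_degree E = Min (range (degree E))"

definition eigenvalues :: "real^'n^'n \<Rightarrow> real set" where
  "eigenvalues A = {l. \<exists>x. x \<noteq> 0 \<and> A *v x = l *\<^sub>R x}"

definition mu :: "('n::finite \<Rightarrow> 'n \<Rightarrow> bool) \<Rightarrow> real" where
  "mu E = Max (eigenvalues (adj_matrix E))"

end

theory Submission
  imports Defs
begin

theorem lemma1:
  fixes E :: "'n::finite \<Rightarrow> 'n \<Rightarrow> bool" and x :: "real^'n"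
  assumes "simple_graph E"
    and "\<exists>i j. E i j"
    and "norm x = 1"
    and "adj_matrix E *v x = mu E *\<^sub>R x"
  shows "Min (range (\<lambda>i. x $ i)) \<le>
    sqrt (real (min_degree E) /
      ((mu E)\<^sup>2 + real (min_degree E) * real CARD('n) - (real (min_degree E))\<^sup>2))"
proof -
  define m where "m = Min (range (\<lambda>i. x $ i))"
  define d where "d = min_degree E"
  define n where "n = CARD('n)"
  define M where "M = mu E"
  have mle: "\<And>i. m \<le> x $ i" unfolding m_def by simp
  have row: "\<And>i. (\<Sum>j\<in>{j. E i j}. x $ j) = M * x $ i"
  proof -
    fix i
    have "(adj_matrix E *v x) $ i = (\<Sum>j\<in>{j. E i j}. x $ j)"
      unfolding adj_matrix_def matrix_vector_mult_def
      by (simp add: sum.If_cases if_distrib[where f="\<lambda>g. g y" for y] cong: if_cong)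
         (simp add: if_distrib[where f="\<lambda>c. c * y" for y] sum.If_cases Int_def)
    then show "(\<Sum>j\<in>{j. E i j}. x $ j) = M * x $ i" using assms(4) M_def by simp
  qed
  have sq: "(\<Sum>j\<in>UNIV. (x $ j)\<^sup>2) = 1"
  proof -
    have "x \<bullet> x = 1" using assms(3) by (simp add: dot_square_norm)
    then show ?thesis by (simp add: inner_vec_def power2_eq_square)
  qed
  obtain u where u: "degree E u = d"
  proof -
    have "Min (range (degree E)) \<in> range (degree E)" by (rule Min_in) auto
    then obtain v where "Min (range (degree E)) = degree E v" by blast
    then show ?thesis using that[of v] unfolding d_def min_degree_def by simp
  qed
  define N where "N = {j. E u j}"
  have cN: "card N = d" using u unfolding N_def degree_def by simp
  have dn: "d \<le> n" using cN unfolding n_def using card_mono[OF finite subset_UNIV, of N] by simp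
  show ?thesis
  proof (cases "m \<le> 0")
    case True
    have "real d * real n - (real d)\<^sup>2 = real d * (real n - real d)" by (simp add: power2_eq_square algebra_simps)
    moreover have "real d * (real n - real d) \<ge> 0" using dn by simp
    ultimately have "M\<^sup>2 + real d * real n - (real d)\<^sup>2 \<ge> 0" by (smt (verit) zero_le_power2)
    then have "0 \<le> sqrt (real d / (M\<^sup>2 + real d * real n - (real d)\<^sup>2))" by simp
    then show ?thesis using True unfolding m_def d_def n_def M_def by linarith
  next
    case False
    then have pos: "\<And>i. x $ i > 0" using mle by (meson not_le order_less_le_trans)
    obtain a b where ab: "E a b" using assms(2) by auto
    have "0 < (\<Sum>j\<in>{j. E a j}. x $ j)"
      using ab pos by (intro sum_pos) auto
    then have "M * x $ a > 0" using row by simp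
    then have Mpos: "M > 0" using pos[of a] by (simp add: zero_less_mult_iff)
    have "(M * x $ u)\<^sup>2 = (\<Sum>j\<in>N. x $ j)\<^sup>2" using row N_def by simp
    also have "\<dots> \<le> (\<Sum>j\<in>N. (x $ j)\<^sup>2) * d"
      using sum_squared_le_sum_of_squares[of "\<lambda>j. x $ j" N] cN by simp
    finally have A: "M\<^sup>2 * (x $ u)\<^sup>2 \<le> (\<Sum>j\<in>N. (x $ j)\<^sup>2) * d"
      by (simp add: power_mult_distrib)
    have B: "(\<Sum>j\<in>N. (x $ j)\<^sup>2) + (\<Sum>j\<in>-N. (x $ j)\<^sup>2) = 1"
      using sq sum.subset_diff[of N UNIV "\<lambda>j. (x $ j)\<^sup>2"] by (simp add: Compl_eq_Diff_UNIV)
    have cC: "card (-N) = n - d" using cN unfolding n_def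
      by (simp add: Compl_eq_Diff_UNIV card_Diff_subset)
    have "(\<Sum>j\<in>-N. m\<^sup>2) \<le> (\<Sum>j\<in>-N. (x $ j)\<^sup>2)"
      using False mle by (intro sum_mono power_mono) auto
    then have C: "real (n - d) * m\<^sup>2 \<le> (\<Sum>j\<in>-N. (x $ j)\<^sup>2)" using cC by simp
    have D: "M\<^sup>2 * m\<^sup>2 \<le> M\<^sup>2 * (x $ u)\<^sup>2"
      using False mle[of u] by (intro mult_left_mono power_mono) auto
    have "M\<^sup>2 * m\<^sup>2 \<le> (1 - real (n - d) * m\<^sup>2) * d"
    proof -
      have "M\<^sup>2 * m\<^sup>2 \<le> (\<Sum>j\<in>N. (x $ j)\<^sup>2) * d" using A D by linarith
      also have "\<dots> \<le> (1 - real (n - d) * m\<^sup>2) * d"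
        using B C by (intro mult_right_mono) auto
      finally show ?thesis .
    qed
    then have E: "m\<^sup>2 * (M\<^sup>2 + real d * real n - (real d)\<^sup>2) \<le> real d"
      using dn by (simp add: of_nat_diff algebra_simps power2_eq_square)
    have Dpos: "M\<^sup>2 + real d * real n - (real d)\<^sup>2 > 0"
    proof -
      have "real d * real n - (real d)\<^sup>2 = real d * (real n - real d)" by (simp add: power2_eq_square algebra_simps)
      moreover have "real d * (real n - real d) \<ge> 0" using dn by simp
      ultimately show ?thesis using Mpos by (smt (verit) zero_less_power)
    qed
    have "m\<^sup>2 \<le> real d / (M\<^sup>2 + real d * real n - (real d)\<^sup>2)"
      using E Dpos by (simp add: pos_le_divide_eq)
    then have "sqrt (m\<^sup>2) \<le> sqrt (real d / (M\<^sup>2 + real d * real n - (real d)\<^sup>2))"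
      using real_sqrt_le_mono by blast
    then show ?thesis using False unfolding m_def d_def n_def M_def by simp
  qed
qed

end
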